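(* Let $P$ be a finite path producible by a tile assembly system $\mathcal T=(T,\sigma,1)$ such that the last tile of $P$ is the unique easternmost tile of $\sigma\cup\mathrm{asm}(P)$. Then either (a) all glues of $P$ that are visible from the north point east, or (b) all glues of $P$ that are visible from the south point east.
   Context: aTAM at temperature 1: $T$ finite set of tile types; tiles $((x,y),t)\in\mathbb Z^2\times T$; adjacent tiles interact if abutting glues have equal type and strength $\ge1$; $\mathcal T=(T,\sigma,1)$ with finite connected seed $\sigma$; producible assemblies grow from $\sigma$ by single tile additions interacting with an existing tile. A path is a sequence $P=P_0P_1\dots$ of tiles with pairwise distinct positions, consecutive ones adjacent and interacting; $\mathrm{asm}(P)$ is the set of its tiles. $P$ is producible if its tiles avoid the positions of $\sigma$, $\sigma\cup\mathrm{asm}(P)$ is producible, and $P_0$ interacts with a tile of $\sigma$. "Easternmost" means largest $x$-coordinate. $\mathrm{glue}_P(a)$ ($0\le a\le|P|-2$) is the glue between $P_a,P_{a+1}$, with position the midpoint of the segment $\mathrm{pos}(P_a)\mathrm{pos}(P_{a+1})$ and direction east/west/north/south according to $\mathrm{pos}(P_{a+1})-\mathrm{pos}(P_a)$ being $(1,0),(-1,0),(0,1),(0,-1)$. $\mathrm{emb}(P)$ is the polygonal curve through the positions of $P$. A glue pointing east or west is visible from the south (resp. north) if the vertical ray from its position downward (resp. upward) meets neither $\mathrm{emb}(P)$ nor $\sigma$ (tile positions or unit segments between adjacent positions of $\sigma$); only east- or west-pointing glues can be visible from the north or south. *)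

theory Defs
  imports "HOL-Analysis.Analysis"
begin

datatype dir = North | East | South | West

type_synonym pos = "int \<times> int"
type_synonym 'tt tile = "pos \<times> 'tt"

fun opp :: "dir \<Rightarrow> dir" where
  "opp North = South" | "opp South = North" | "opp East = West" | "opp West = East"

definition adjacent :: "pos \<Rightarrow> pos \<Rightarrow> bool" where
  "adjacent p q \<longleftrightarrow> \<bar>fst q - fst p\<bar> + \<bar>snd q - snd p\<bar> = 1"

text \<open>Direction of the unit vector q - p (meaningful for adjacent positions).\<close>
definition dir_of :: "pos \<Rightarrow> pos \<Rightarrow> dir" where
  "dir_of p q = (if fst q - fst p = 1 then East
                 else if fst q - fst p = -1 then West
                 else if snd q - snd p = 1 then North else South)"

definition interacts ::
  "('tt \<Rightarrow> dir \<Rightarrow> 'g) \<Rightarrow> ('g \<Rightarrow> nat) \<Rightarrow> 'tt tile \<Rightarrow> 'tt tile \<Rightarrow> bool" where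
  "interacts glue str a b \<longleftrightarrow>
     adjacent (fst a) (fst b) \<and>
     glue (snd a) (dir_of (fst a) (fst b)) = glue (snd b) (opp (dir_of (fst a) (fst b))) \<and>
     str (glue (snd a) (dir_of (fst a) (fst b))) \<ge> 1"

definition is_assembly :: "'tt tile set \<Rightarrow> bool" where
  "is_assembly A \<longleftrightarrow> (\<forall>a\<in>A. \<forall>b\<in>A. fst a = fst b \<longrightarrow> a = b)"

definition grid_connected :: "pos set \<Rightarrow> bool" where
  "grid_connected S \<longleftrightarrow>
     (\<forall>p\<in>S. \<forall>q\<in>S. (\<lambda>a b. a \<in> S \<and> b \<in> S \<and> adjacent a b)\<^sup>*\<^sup>* p q)"

definition valid_tas ::
  "'tt set \<Rightarrow> 'tt tile set \<Rightarrow> bool" where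
  "valid_tas T \<sigma> \<longleftrightarrow> finite T \<and> finite \<sigma> \<and> \<sigma> \<noteq> {} \<and> is_assembly \<sigma> \<and>
     snd ` \<sigma> \<subseteq> T \<and> grid_connected (fst ` \<sigma>)"

inductive producible ::
  "'tt set \<Rightarrow> ('tt \<Rightarrow> dir \<Rightarrow> 'g) \<Rightarrow> ('g \<Rightarrow> nat) \<Rightarrow> 'tt tile set \<Rightarrow> 'tt tile set \<Rightarrow> bool"
  for T glue str \<sigma> where
  seed: "producible T glue str \<sigma> \<sigma>"
| step: "producible T glue str \<sigma> A \<Longrightarrow> t \<in> T \<Longrightarrow> p \<notin> fst ` A \<Longrightarrow>
         (\<exists>b\<in>A. interacts glue str (p, t) b) \<Longrightarrow>
         producible T glue str \<sigma> (insert (p, t) A)"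

definition is_path ::
  "('tt \<Rightarrow> dir \<Rightarrow> 'g) \<Rightarrow> ('g \<Rightarrow> nat) \<Rightarrow> 'tt tile list \<Rightarrow> bool" where
  "is_path glue str P \<longleftrightarrow> distinct (map fst P) \<and>
     (\<forall>i. Suc i < length P \<longrightarrow> interacts glue str (P ! i) (P ! Suc i))"

text \<open>interacts implies adjacency, so consecutive tiles are adjacent.\<close>

definition producible_path ::
  "'tt set \<Rightarrow> ('tt \<Rightarrow> dir \<Rightarrow> 'g) \<Rightarrow> ('g \<Rightarrow> nat) \<Rightarrow> 'tt tile set \<Rightarrow> 'tt tile list \<Rightarrow> bool" where
  "producible_path T glue str \<sigma> P \<longleftrightarrow>
     P \<noteq> [] \<and> is_path glue str P \<and>
     fst ` set P \<inter> fst ` \<sigma> = {} \<and>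
     producible T glue str \<sigma> (\<sigma> \<union> set P) \<and>
     (\<exists>s\<in>\<sigma>. interacts glue str (hd P) s)"

definition rpos :: "pos \<Rightarrow> real \<times> real" where
  "rpos p = (real_of_int (fst p), real_of_int (snd p))"

definition emb :: "'tt tile list \<Rightarrow> (real \<times> real) set" where
  "emb P = rpos ` fst ` set P \<union>
     (\<Union>i\<in>{i. Suc i < length P}. closed_segment (rpos (fst (P ! i))) (rpos (fst (P ! Suc i))))"

definition seed_geom :: "'tt tile set \<Rightarrow> (real \<times> real) set" where
  "seed_geom \<sigma> = rpos ` fst ` \<sigma> \<union>
     \<Union>{closed_segment (rpos p) (rpos q) | p q. p \<in> fst ` \<sigma> \<and> q \<in> fst ` \<sigma> \<and> adjacent p q}"

definition glue_dir :: "'tt tile list \<Rightarrow> nat \<Rightarrow> dir" where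
  "glue_dir P a = dir_of (fst (P ! a)) (fst (P ! Suc a))"

definition glue_pos :: "'tt tile list \<Rightarrow> nat \<Rightarrow> real \<times> real" where
  "glue_pos P a = midpoint (rpos (fst (P ! a))) (rpos (fst (P ! Suc a)))"

definition visible_north :: "'tt tile set \<Rightarrow> 'tt tile list \<Rightarrow> nat \<Rightarrow> bool" where
  "visible_north \<sigma> P a \<longleftrightarrow> Suc a < length P \<and> glue_dir P a \<in> {East, West} \<and>
     (\<forall>s::real. s > 0 \<longrightarrow>
        (fst (glue_pos P a), snd (glue_pos P a) + s) \<notin> emb P \<union> seed_geom \<sigma>)"

definition visible_south :: "'tt tile set \<Rightarrow> 'tt tile list \<Rightarrow> nat \<Rightarrow> bool" where
  "visible_south \<sigma> P a \<longleftrightarrow> Suc a < length P \<and> glue_dir P a \<in> {East, West} \<and>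
     (\<forall>s::real. s > 0 \<longrightarrow>
        (fst (glue_pos P a), snd (glue_pos P a) - s) \<notin> emb P \<union> seed_geom \<sigma>)"

end

theory Submission imports Defs begin

definition dbl :: "int \<times> int \<Rightarrow> int \<times> int" where
  "dbl p = (2 * fst p, 2 * snd p)"
definition addp :: "int \<times> int \<Rightarrow> int \<times> int \<Rightarrow> int \<times> int" where
  "addp p q = (fst p + fst q, snd p + snd q)"

fun finew :: "(int \<times> int) list \<Rightarrow> (int \<times> int) list" where
  "finew [] = []"
| "finew [p] = [dbl p]"
| "finew (p # q # r) = dbl p # addp p q # finew (q # r)"

definition hc :: "int \<Rightarrow> (int \<Rightarrow> bool) \<Rightarrow> (int \<times> int) list \<Rightarrow> nat" where
  "hc x Pr w = length (filter (\<lambda>(u,v). snd u = snd v \<and> min (fst u) (fst v) = x \<and> fst u \<noteq> fst v \<and> Pr (snd u)) (zip w (tl w)))"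

definition chg :: "(int \<times> int) set \<Rightarrow> (int \<times> int) list \<Rightarrow> nat" where
  "chg V w = length (filter (\<lambda>(u,v). (u\<in>V) \<noteq> (v\<in>V)) (zip w (tl w)))"

lemma chg_parity: "w \<noteq> [] \<Longrightarrow> odd (chg V w) = ((hd w \<in> V) \<noteq> (last w \<in> V))"
proof (induction w)
  case Nil then show ?case by simp
next
  case (Cons x xs)
  show ?case
  proof (cases xs)
    case Nil then show ?thesis by (simp add: chg_def)
  next
    case (Cons y ys)
    have "chg V (x # xs) = (if (x\<in>V) \<noteq> (y\<in>V) then 1 else 0) + chg V xs"
      using Cons by (simp add: chg_def)
    then show ?thesis using Cons.IH Cons by auto
  qed
qed

lemma count_add:
  assumes "\<forall>z\<in>set xs. (if P z then 1 else 0) + (if Q z then 1 else 0) = (if R z then 1 else (0::nat))"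
  shows "length (filter P xs) + length (filter Q xs) = length (filter R xs)"
  using assms by (induction xs) (auto split: if_splits)

lemma steps_mem:
  assumes "(u,v) \<in> set (zip w (tl w))"
  shows "u \<in> set w \<and> v \<in> set w \<and> (successively adjacent w \<longrightarrow> adjacent u v)"
  using assms
proof (induction w)
  case Nil then show ?case by simp
next
  case (Cons x xs)
  show ?case
  proof (cases xs)
    case Nil then show ?thesis using Cons by simp
  next
    case (Cons y ys)
    then have "(u,v) = (x,y) \<or> (u,v) \<in> set (zip xs (tl xs))" using Cons.prems by auto
    then show ?thesis using Cons.IH Cons by (auto simp: successively_Cons)
  qed
qed

lemma right_move:
  assumes sa: "successively adjacent Q" and ne: "Q \<noteq> []"
    and q1: "(x+1,y) \<notin> set Q"
    and l: "x + 1 < fst (last Q)"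
    and h: "\<not> (x + 1 = fst (hd Q) \<and> y > snd (hd Q))"
  shows "even (hc x (\<lambda>h. h < y) Q + hc (x+1) (\<lambda>h. h < y) Q)"
proof -
  let ?V = "{p. fst p = x+1 \<and> snd p < y}"
  have "hc x (\<lambda>h. h < y) Q + hc (x+1) (\<lambda>h. h < y) Q = chg ?V Q"
    unfolding hc_def chg_def
  proof (rule count_add, rule ballI)
    fix z assume z: "z \<in> set (zip Q (tl Q))"
    obtain u v where uv: "z = (u,v)" by (cases z)
    have "u \<in> set Q" "v \<in> set Q" "adjacent u v" using steps_mem[of u v Q] z uv sa by auto
    then have "u \<noteq> (x+1,y)" "v \<noteq> (x+1,y)" using q1 by auto
    with \<open>adjacent u v\<close> show "(if (case z of (u,v) \<Rightarrow> snd u = snd v \<and> min (fst u) (fst v) = x \<and> fst u \<noteq> fst v \<and> snd u < y) then 1 else 0)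
      + (if (case z of (u,v) \<Rightarrow> snd u = snd v \<and> min (fst u) (fst v) = x+1 \<and> fst u \<noteq> fst v \<and> snd u < y) then 1 else 0)
      = (if (case z of (u,v) \<Rightarrow> (u\<in>?V) \<noteq> (v\<in>?V)) then 1 else (0::nat))"
      unfolding uv by (cases u; cases v) (auto simp: adjacent_def abs_if split: if_splits)
  qed
  moreover have "\<not> odd (chg ?V Q)" using chg_parity[OF ne, of ?V] l h by auto
  ultimately show ?thesis by simp
qed


lemma up_move:
  assumes sa: "successively adjacent Q" and q: "(x,y) \<notin> set Q"
  shows "hc x (\<lambda>h. h < y + 1) Q = hc x (\<lambda>h. h < y) Q"
  unfolding hc_def
proof (rule arg_cong[where f=length], rule filter_cong[OF refl])
  fix z assume z: "z \<in> set (zip Q (tl Q))"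
  obtain u v where uv: "z = (u,v)" by (cases z)
  have "u \<in> set Q" "v \<in> set Q" using steps_mem[of u v Q] z uv by auto
  then have "u \<noteq> (x,y)" "v \<noteq> (x,y)" using q by auto
  then show "(case z of (u,v) \<Rightarrow> snd u = snd v \<and> min (fst u) (fst v) = x \<and> fst u \<noteq> fst v \<and> snd u < y + 1)
    = (case z of (u,v) \<Rightarrow> snd u = snd v \<and> min (fst u) (fst v) = x \<and> fst u \<noteq> fst v \<and> snd u < y)"
    unfolding uv by (cases u; cases v) (auto simp: min_def split: if_splits)
qed

definition avoid :: "(int \<times> int) list \<Rightarrow> int \<times> int \<Rightarrow> bool" where
  "avoid Q z \<longleftrightarrow> z \<notin> set Q \<and> fst z < fst (last Q) \<and> \<not> (fst z = fst (hd Q) \<and> snd z > snd (hd Q))"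

definition Dv :: "(int \<times> int) list \<Rightarrow> int \<times> int \<Rightarrow> nat" where
  "Dv Q z = hc (fst z) (\<lambda>h. h < snd z) Q"

lemma inv_step:
  assumes sa: "successively adjacent Q" and ne: "Q \<noteq> []"
    and a1: "avoid Q q" and a2: "avoid Q q'" and adj: "adjacent q q'"
  shows "even (Dv Q q) = even (Dv Q q')"
proof -
  obtain x y where q: "q = (x,y)" by (cases q)
  obtain x' y' where q': "q' = (x',y')" by (cases q')
  have cases: "(x' = x + 1 \<and> y' = y) \<or> (x = x' + 1 \<and> y = y') \<or> (x' = x \<and> y' = y + 1) \<or> (x = x' \<and> y = y' + 1)"
    using adj q q' by (auto simp: adjacent_def abs_if split: if_splits)
  show ?thesis
  proof -
    { assume c: "x' = x + 1 \<and> y' = y"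
      have "even (hc x (\<lambda>h. h < y) Q + hc (x+1) (\<lambda>h. h < y) Q)"
        by (rule right_move[OF sa ne]) (use a2 c q' in \<open>auto simp: avoid_def\<close>)
      then have ?thesis using c q q' by (simp add: Dv_def) }
    moreover
    { assume c: "x = x' + 1 \<and> y = y'"
      have "even (hc x' (\<lambda>h. h < y') Q + hc (x'+1) (\<lambda>h. h < y') Q)"
        by (rule right_move[OF sa ne]) (use a1 c q in \<open>auto simp: avoid_def\<close>)
      then have ?thesis using c q q' by (simp add: Dv_def) }
    moreover
    { assume c: "x' = x \<and> y' = y + 1"
      have "hc x (\<lambda>h. h < y + 1) Q = hc x (\<lambda>h. h < y) Q"
        by (rule up_move[OF sa]) (use a1 q in \<open>auto simp: avoid_def\<close>)
      then have ?thesis using c q q' by (simp add: Dv_def) }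
    moreover
    { assume c: "x = x' \<and> y = y' + 1"
      have "hc x' (\<lambda>h. h < y' + 1) Q = hc x' (\<lambda>h. h < y') Q"
        by (rule up_move[OF sa]) (use a2 q' in \<open>auto simp: avoid_def\<close>)
      then have ?thesis using c q q' by (simp add: Dv_def) }
    ultimately show ?thesis using cases by blast
  qed
qed

lemma walk_inv:
  assumes sa: "successively adjacent Q" and ne: "Q \<noteq> []"
  shows "R \<noteq> [] \<Longrightarrow> successively adjacent R \<Longrightarrow> \<forall>z\<in>set R. avoid Q z \<Longrightarrow>
     even (Dv Q (hd R)) = even (Dv Q (last R))"
proof (induction R)
  case Nil then show ?case by simp
next
  case (Cons r rs)
  show ?case
  proof (cases rs)
    case Nil then show ?thesis by simp
  next
    case (Cons r2 rs2)
    have "even (Dv Q r) = even (Dv Q r2)"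
      using inv_step[OF sa ne, of r r2] Cons.prems Cons by auto
    moreover have "even (Dv Q (hd rs)) = even (Dv Q (last rs))"
      using Cons.IH Cons.prems Cons by auto
    ultimately show ?thesis using Cons by simp
  qed
qed

lemma total:
  assumes sa: "successively adjacent Q" and q: "(x,y) \<notin> set Q"
  shows "hc x (\<lambda>h. h > y) Q + hc x (\<lambda>h. h < y) Q = chg {p. fst p \<le> x} Q"
  unfolding hc_def chg_def
proof (rule count_add, rule ballI)
  fix z assume z: "z \<in> set (zip Q (tl Q))"
  obtain u v where uv: "z = (u,v)" by (cases z)
  have "u \<in> set Q" "v \<in> set Q" "adjacent u v" using steps_mem[of u v Q] z uv sa by auto
  then have "u \<noteq> (x,y)" "v \<noteq> (x,y)" using q by auto
  with \<open>adjacent u v\<close> show "(if (case z of (u,v) \<Rightarrow> snd u = snd v \<and> min (fst u) (fst v) = x \<and> fst u \<noteq> fst v \<and> snd u > y) then 1 else 0)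
      + (if (case z of (u,v) \<Rightarrow> snd u = snd v \<and> min (fst u) (fst v) = x \<and> fst u \<noteq> fst v \<and> snd u < y) then 1 else 0)
      = (if (case z of (u,v) \<Rightarrow> (u\<in>{p. fst p \<le> x}) \<noteq> (v\<in>{p. fst p \<le> x})) then 1 else (0::nat))"
    unfolding uv by (cases u; cases v) (auto simp: adjacent_def abs_if min_def split: if_splits)
qed


lemma finew_adj: "successively adjacent ps \<Longrightarrow> successively adjacent (finew ps)"
proof (induction ps rule: finew.induct)
  case (3 p q r)
  have "adjacent p q" using "3.prems" by simp
  then have "adjacent (dbl p) (addp p q)" "adjacent (addp p q) (dbl q)"
    by (auto simp: adjacent_def dbl_def addp_def abs_if split: if_splits)
  moreover have "successively adjacent (finew (q # r))" using 3 by simp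
  moreover have "hd (finew (q # r)) = dbl q" by (cases r) auto
  ultimately show ?case by (cases r) auto
qed auto

lemma finew_hd_last: "ps \<noteq> [] \<Longrightarrow> finew ps \<noteq> [] \<and> hd (finew ps) = dbl (hd ps) \<and> last (finew ps) = dbl (last ps)"
  by (induction ps rule: finew.induct) auto

lemma finew_set: "z \<in> set (finew ps) \<Longrightarrow>
   (\<exists>i<length ps. z = dbl (ps!i)) \<or> (\<exists>i. Suc i < length ps \<and> z = addp (ps!i) (ps!Suc i))"
proof (induction ps rule: finew.induct)
  case (3 p q r)
  then consider "z = dbl p" | "z = addp p q" | "z \<in> set (finew (q # r))" by auto
  then show ?case
  proof cases
    case 1 then show ?thesis by (intro disjI1 exI[of _ 0]) auto
  next
    case 2 then show ?thesis by (intro disjI2 exI[of _ 0]) auto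
  next
    case 3
    then consider i where "i < length (q#r)" "z = dbl ((q#r)!i)"
      | i where "Suc i < length (q#r)" "z = addp ((q#r)!i) ((q#r)!Suc i)" using "3.IH" by blast
    then show ?thesis
    proof cases
      case 1 then show ?thesis by (intro disjI1 exI[of _ "Suc i"]) auto
    next
      case 2 then show ?thesis by (intro disjI2 exI[of _ "Suc i"]) auto
    qed
  qed
qed auto

lemma finew_dbl_in: "i < length ps \<Longrightarrow> dbl (ps!i) \<in> set (finew ps)"
proof (induction ps arbitrary: i rule: finew.induct)
  case (3 p q r) then show ?case by (cases i) auto
qed auto

lemma finew_addp_in: "Suc i < length ps \<Longrightarrow> addp (ps!i) (ps!Suc i) \<in> set (finew ps)"
proof (induction ps arbitrary: i rule: finew.induct)
  case (3 p q r) then show ?case by (cases i) auto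
qed auto

definition flipy :: "int \<times> int \<Rightarrow> int \<times> int" where "flipy p = (fst p, - snd p)"

lemma finew_refl: "finew (map flipy ps) = map flipy (finew ps)"
  by (induction ps rule: finew.induct) (auto simp: flipy_def dbl_def addp_def)

lemma mid_inj:
  assumes "adjacent p q" "adjacent p' q'" "addp p q = addp p' q'"
  shows "(p = p' \<and> q = q') \<or> (p = q' \<and> q = p')"
  using assms by (cases p; cases q; cases p'; cases q') (auto simp: adjacent_def addp_def abs_if split: if_splits; presburger)

lemma mid_ne_dbl: "adjacent p q \<Longrightarrow> addp p q \<noteq> dbl r"
  by (cases p; cases q; cases r) (auto simp: adjacent_def addp_def dbl_def abs_if split: if_splits; presburger)

lemma mid_ne_oddodd: "adjacent p q \<Longrightarrow> addp p q \<noteq> (2*x - 1, 2*y - 1)"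
  by (cases p; cases q) (auto simp: adjacent_def addp_def abs_if split: if_splits; presburger)


lemma dbl_inj: "dbl p = dbl q \<Longrightarrow> p = q"
  by (cases p; cases q) (auto simp: dbl_def)

lemma core:
  fixes ps :: "(int \<times> int) list" and a b :: nat
  assumes dist: "distinct ps" and adj: "successively adjacent ps"
    and east: "\<forall>j. Suc j < length ps \<longrightarrow> fst (ps!j) < fst (last ps)"
    and a: "Suc a < length ps" and ba: "b \<le> a"
    and wa: "ps!Suc a = (fst (ps!a) - 1, snd (ps!a))"
    and wb: "ps!Suc b = (fst (ps!b) - 1, snd (ps!b))"
    and nv: "\<forall>z\<in>set (finew ps). fst z = 2* fst(ps!a) - 1 \<longrightarrow> snd z \<le> 2* snd(ps!a)"
    and sv: "\<forall>z\<in>set (finew ps). fst z = 2* fst(ps!b) - 1 \<longrightarrow> snd z \<ge> 2* snd(ps!b)"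
  shows False
proof -
  obtain xa ya where pa: "ps!a = (xa,ya)" by (cases "ps!a")
  obtain xb yb where pb: "ps!b = (xb,yb)" by (cases "ps!b")
  have adjn: "\<And>i. Suc i < length ps \<Longrightarrow> adjacent (ps!i) (ps!Suc i)"
    using successively_nth[OF adj] by blast
  have nthinj: "\<And>i j. i < length ps \<Longrightarrow> j < length ps \<Longrightarrow> ps!i = ps!j \<Longrightarrow> i = j"
    using dist nth_eq_iff_index_eq by blast
  have ne: "ps \<noteq> []" using a by auto
  have lastn: "last ps = ps ! (length ps - 1)" using ne by (simp add: last_conv_nth)
  have eastj: "\<And>j. j \<le> a \<Longrightarrow> fst (ps!j) < fst (last ps)" using east a by auto
  have xa_l: "xa < fst (last ps)" using eastj[of a] pa by simp
  have xb_l: "xb < fst (last ps)" using eastj[of b] pb ba by simp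
  define s where "s = (2*xa - 1, 2*ya)"
  have s_eq: "s = addp (ps!a) (ps!Suc a)" using wa pa by (simp add: s_def addp_def)
  define L where "L = drop (Suc a) ps"
  define Q where "Q = s # finew L"
  define M where "M = take (Suc a - b) (drop b ps)"
  define R where "R = [(2*xb - 1, 2*yb - 1), (2*xb, 2*yb - 1)] @ finew M @ [(2*xa, 2*ya - 1), (2*xa - 1, 2*ya - 1)]"
  have Lne: "L \<noteq> []" and hdL: "hd L = ps!Suc a" and lastL: "last L = last ps"
    using a by (auto simp: L_def hd_drop_conv_nth)
  have Lnth: "\<And>i. i < length L \<Longrightarrow> L!i = ps!(Suc a + i)" "length L = length ps - Suc a"
    using a by (auto simp: L_def)
  have Mlen: "length M = Suc a - b" using a ba by (simp add: M_def)
  have Mnth: "\<And>i. i < length M \<Longrightarrow> M!i = ps!(b + i)" using a ba by (simp add: M_def)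
  have Mne: "M \<noteq> []" using Mlen ba by auto
  have hdM: "hd M = ps!b" using Mne Mnth[of 0] by (simp add: hd_conv_nth)
  have lastM: "last M = ps!a" using Mne Mnth[of "length M - 1"] Mlen ba by (simp add: last_conv_nth)
  have saL: "successively adjacent L"
    unfolding successively_conv_nth using Lnth adjn by (auto simp: add.commute)
  have saM: "successively adjacent M"
    unfolding successively_conv_nth using Mnth Mlen adjn a by auto
  have fL: "finew L \<noteq> [] \<and> hd (finew L) = dbl (ps!Suc a) \<and> last (finew L) = dbl (last ps)"
    using finew_hd_last[OF Lne] hdL lastL by simp
  have fM: "finew M \<noteq> [] \<and> hd (finew M) = dbl (ps!b) \<and> last (finew M) = dbl (ps!a)"
    using finew_hd_last[OF Mne] hdM lastM by simp
  have saQ: "successively adjacent Q"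
    using finew_adj[OF saL] fL wa pa
    by (auto simp: Q_def successively_Cons s_def dbl_def adjacent_def)
  have QNe: "Q \<noteq> []" by (simp add: Q_def)
  have hdQ: "hd Q = s" by (simp add: Q_def)
  have lastQ: "last Q = dbl (last ps)" using fL by (simp add: Q_def)
  have saR: "successively adjacent R"
  proof -
    have e: "R = ([(2*xb - 1, 2*yb - 1), (2*xb, 2*yb - 1)] @ finew M) @ [(2*xa, 2*ya - 1), (2*xa - 1, 2*ya - 1)]"
      by (simp add: R_def)
    have "successively adjacent ([(2*xb - 1, 2*yb - 1), (2*xb, 2*yb - 1)] @ finew M)"
      unfolding successively_append_iff using finew_adj[OF saM] fM pb by (simp add: dbl_def adjacent_def)
    then show ?thesis unfolding e successively_append_iff using fM pa by (simp add: dbl_def adjacent_def)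
  qed
  have hdR: "hd R = (2*xb - 1, 2*yb - 1)" by (simp add: R_def)
  have lastR: "last R = (2*xa - 1, 2*ya - 1)" by (simp add: R_def)
  have Qset: "z = s \<or> (\<exists>i. Suc a \<le> i \<and> i < length ps \<and> z = dbl (ps!i))
      \<or> (\<exists>i. Suc a \<le> i \<and> Suc i < length ps \<and> z = addp (ps!i) (ps!Suc i))" if "z \<in> set Q" for z
  proof -
    from that have "z = s \<or> z \<in> set (finew L)" by (auto simp: Q_def)
    moreover
    { assume "z \<in> set (finew L)"
      from finew_set[OF this] have ?thesis
      proof
        assume "\<exists>i<length L. z = dbl (L ! i)"
        then obtain i where "i < length L" "z = dbl (L!i)" by blast
        then show ?thesis using Lnth by (intro disjI2 disjI1 exI[of _ "Suc a + i"]) auto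
      next
        assume "\<exists>i. Suc i < length L \<and> z = addp (L ! i) (L ! Suc i)"
        then obtain i where "Suc i < length L" "z = addp (L!i) (L!Suc i)" by blast
        then show ?thesis using Lnth by (intro disjI2 disjI2 exI[of _ "Suc a + i"]) auto
      qed }
    ultimately show "?thesis" by blast
  qed
  have Mset: "(\<exists>j. b \<le> j \<and> j \<le> a \<and> z = dbl (ps!j))
      \<or> (\<exists>j. b \<le> j \<and> j < a \<and> z = addp (ps!j) (ps!Suc j))" if "z \<in> set (finew M)" for z
  proof -
    from finew_set[OF that] show "?thesis"
    proof
      assume "\<exists>i<length M. z = dbl (M ! i)"
      then obtain i where "i < length M" "z = dbl (M!i)" by blast
      then show ?thesis using Mnth Mlen by (intro disjI1 exI[of _ "b + i"]) auto
    next
      assume "\<exists>i. Suc i < length M \<and> z = addp (M ! i) (M ! Suc i)"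
      then obtain i where "Suc i < length M" "z = addp (M!i) (M!Suc i)" by blast
      then show ?thesis using Mnth[of i] Mnth[of "Suc i"] Mlen by (intro disjI2 exI[of _ "b + i"]) auto
    qed
  qed
  have QinF: "\<And>z. z \<in> set Q \<Longrightarrow> z \<in> set (finew ps)"
    using Qset finew_dbl_in finew_addp_in s_eq a by metis
  have dblQ: "\<And>j. j \<le> a \<Longrightarrow> dbl (ps!j) \<notin> set Q"
  proof
    fix j assume j: "j \<le> a" and "dbl (ps!j) \<in> set Q"
    from Qset[OF this(2)] show False
    proof (elim disjE exE conjE)
      assume "dbl (ps!j) = s" then show False by (cases "ps!j") (simp add: dbl_def s_def; presburger)
    next
      fix i assume "Suc a \<le> i" "i < length ps" "dbl (ps!j) = dbl (ps!i)"
      then show False using nthinj[of j i] dbl_inj j a by fastforce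
    next
      fix i assume "Suc a \<le> i" "Suc i < length ps" "dbl (ps!j) = addp (ps!i) (ps!Suc i)"
      then show False using mid_ne_dbl adjn by metis
    qed
  qed
  have oddQ: "\<And>x y. (2*x - 1, 2*y - 1) \<notin> set Q"
  proof
    fix x y assume "(2*x - 1, 2*y - 1) \<in> set Q"
    from Qset[OF this] show False
    proof (elim disjE exE conjE)
      assume "(2*x - 1, 2*y - 1) = s" then show False by (simp add: s_def; presburger)
    next
      fix i assume "(2*x - 1, 2*y - 1) = dbl (ps!i)" then show False by (simp add: dbl_def; presburger)
    next
      fix i assume "Suc i < length ps" "(2*x - 1, 2*y - 1) = addp (ps!i) (ps!Suc i)"
      then show False using mid_ne_oddodd adjn by metis
    qed
  qed
  have belowQ: "\<And>j. j \<le> a \<Longrightarrow> (2* fst (ps!j), 2* snd (ps!j) - 1) \<notin> set Q"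
  proof
    fix j assume j: "j \<le> a" and "(2* fst (ps!j), 2* snd (ps!j) - 1) \<in> set Q"
    from Qset[OF this(2)] show False
    proof (elim disjE exE conjE)
      assume "(2* fst (ps!j), 2* snd (ps!j) - 1) = s" then show False by (simp add: s_def; presburger)
    next
      fix i assume "(2* fst (ps!j), 2* snd (ps!j) - 1) = dbl (ps!i)" then show False by (simp add: dbl_def; presburger)
    next
      fix i assume i: "Suc a \<le> i" "Suc i < length ps" "(2* fst (ps!j), 2* snd (ps!j) - 1) = addp (ps!i) (ps!Suc i)"
      have ad: "adjacent (ps!j) (fst (ps!j), snd (ps!j) - 1)" by (simp add: adjacent_def)
      have "(2* fst (ps!j), 2* snd (ps!j) - 1) = addp (ps!j) (fst (ps!j), snd (ps!j) - 1)" by (simp add: addp_def)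
      then have "ps!j = ps!i \<or> ps!j = ps!Suc i" using mid_inj[OF adjn[OF i(2)] ad] i(3) by auto
      then show False using nthinj[of j i] nthinj[of j "Suc i"] i j a by fastforce
    qed
  qed
  have avR: "\<forall>z\<in>set R. avoid Q z"
  proof
    fix z assume zR: "z \<in> set R"
    have fl: "fst (last Q) = 2 * fst (last ps)" using lastQ by (simp add: dbl_def)
    have "z = (2*xb - 1, 2*yb - 1) \<or> z = (2*xb, 2*yb - 1) \<or> z \<in> set (finew M) \<or> z = (2*xa, 2*ya - 1) \<or> z = (2*xa - 1, 2*ya - 1)"
      using zR by (auto simp: R_def)
    then show "avoid Q z"
    proof (elim disjE)
      assume z: "z = (2*xb - 1, 2*yb - 1)"
      have "\<not> (2*xb - 1 = 2*xa - 1 \<and> 2*yb - 1 > 2*ya)"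
      proof
        assume h: "2*xb - 1 = 2*xa - 1 \<and> 2*yb - 1 > 2*ya"
        have "addp (ps!b) (ps!Suc b) \<in> set (finew ps)" using finew_addp_in ba a by simp
        then show False using nv h wb pb pa by (auto simp: addp_def)
      qed
      then show ?thesis using z oddQ fl xb_l hdQ by (auto simp: avoid_def s_def)
    next
      assume z: "z = (2*xb, 2*yb - 1)"
      then show ?thesis using belowQ[of b] ba pb fl xb_l hdQ by (auto simp: avoid_def s_def; presburger)
    next
      assume z: "z = (2*xa, 2*ya - 1)"
      then show ?thesis using belowQ[of a] pa fl xa_l hdQ by (auto simp: avoid_def s_def; presburger)
    next
      assume z: "z = (2*xa - 1, 2*ya - 1)"
      then show ?thesis using oddQ fl xa_l hdQ by (auto simp: avoid_def s_def)
    next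
      assume zM: "z \<in> set (finew M)"
      from Mset[OF this] show ?thesis
      proof (elim disjE exE conjE)
        fix j assume j: "b \<le> j" "j \<le> a" "z = dbl (ps!j)"
        have "fst (ps!j) < fst (last ps)" using eastj j by simp
        then show ?thesis using dblQ[of j] j fl hdQ by (auto simp: avoid_def s_def dbl_def; presburger)
      next
        fix j assume j: "b \<le> j" "j < a" "z = addp (ps!j) (ps!Suc j)"
        have e: "fst (ps!j) < fst (last ps)" "fst (ps!Suc j) < fst (last ps)" using eastj j by auto
        have adjj: "adjacent (ps!j) (ps!Suc j)" using adjn j a by simp
        have nq: "z \<notin> set Q"
        proof
          assume "z \<in> set Q"
          from Qset[OF this] show False
          proof (elim disjE exE conjE)
            assume "z = s"
            then have "ps!j = ps!a \<or> ps!j = ps!Suc a" using mid_inj[OF adjj adjn[OF a]] j s_eq by auto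
            then show False using nthinj[of j a] nthinj[of j "Suc a"] j a by fastforce
          next
            fix i assume "z = dbl (ps!i)" then show False using mid_ne_dbl adjj j by metis
          next
            fix i assume i: "Suc a \<le> i" "Suc i < length ps" "z = addp (ps!i) (ps!Suc i)"
            then have "ps!j = ps!i \<or> ps!j = ps!Suc i" using mid_inj[OF adjj adjn[OF i(2)]] j by auto
            then show False using nthinj[of j i] nthinj[of j "Suc i"] i j a by fastforce
          qed
        qed
        have "z \<in> set (finew ps)" using finew_addp_in j a by simp
        then have "fst z = 2*xa - 1 \<longrightarrow> snd z \<le> 2*ya" using nv pa by auto
        then show ?thesis using nq e j fl hdQ by (auto simp: avoid_def s_def addp_def)
      qed
    qed
  qed
  have par: "even (Dv Q (hd R)) = even (Dv Q (last R))"
    using walk_inv[OF saQ QNe, of R] saR avR by (simp add: R_def)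
  have D1: "Dv Q (hd R) = 0"
  proof -
    have "\<forall>z\<in>set (zip Q (tl Q)). \<not> (case z of (u,v) \<Rightarrow> snd u = snd v \<and> min (fst u) (fst v) = 2*xb - 1 \<and> fst u \<noteq> fst v \<and> snd u < 2*yb - 1)"
    proof
      fix z assume z: "z \<in> set (zip Q (tl Q))"
      obtain u v where uv: "z = (u,v)" by (cases z)
      show "\<not> (case z of (u,v) \<Rightarrow> snd u = snd v \<and> min (fst u) (fst v) = 2*xb - 1 \<and> fst u \<noteq> fst v \<and> snd u < 2*yb - 1)"
      proof
        assume H: "case z of (u,v) \<Rightarrow> snd u = snd v \<and> min (fst u) (fst v) = 2*xb - 1 \<and> fst u \<noteq> fst v \<and> snd u < 2*yb - 1"
        then have st: "snd u = snd v" "min (fst u) (fst v) = 2*xb - 1" "snd v < 2*yb - 1" using uv by auto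
        have "u \<in> set Q" "v \<in> set Q" using steps_mem[of u v Q] z uv by auto
        then have "u \<in> set (finew ps)" "v \<in> set (finew ps)" using QinF by auto
        then show False using sv st pb by (auto simp: min_def split: if_splits)
      qed
    qed
    then show ?thesis unfolding Dv_def hdR hc_def by (simp add: filter_empty_conv)
  qed
  have U4: "hc (2*xa - 1) (\<lambda>h. h > 2*ya - 1) Q = 0"
  proof -
    have "\<forall>z\<in>set (zip Q (tl Q)). \<not> (case z of (u,v) \<Rightarrow> snd u = snd v \<and> min (fst u) (fst v) = 2*xa - 1 \<and> fst u \<noteq> fst v \<and> snd u > 2*ya - 1)"
    proof
      fix z assume z: "z \<in> set (zip Q (tl Q))"
      obtain u v where uv: "z = (u,v)" by (cases z)
      show "\<not> (case z of (u,v) \<Rightarrow> snd u = snd v \<and> min (fst u) (fst v) = 2*xa - 1 \<and> fst u \<noteq> fst v \<and> snd u > 2*ya - 1)"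
      proof
        assume H: "case z of (u,v) \<Rightarrow> snd u = snd v \<and> min (fst u) (fst v) = 2*xa - 1 \<and> fst u \<noteq> fst v \<and> snd u > 2*ya - 1"
        then have st: "snd u = snd v" "min (fst u) (fst v) = 2*xa - 1" "fst u \<noteq> fst v" "2*ya - 1 < snd v" using uv by auto
        have m: "u \<in> set Q" "v \<in> set Q" "adjacent u v" using steps_mem[of u v Q] z uv saQ by auto
        then have "u \<in> set (finew ps)" "v \<in> set (finew ps)" using QinF by auto
        then have "snd v = 2*ya" using nv st pa by (auto simp: min_def split: if_splits)
        then have "u = dbl (ps!a) \<or> v = dbl (ps!a)"
          using st m(3) pa by (cases u; cases v) (auto simp: dbl_def adjacent_def min_def abs_if split: if_splits)
        then show False using dblQ[of a] m by auto
      qed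
    qed
    then show ?thesis unfolding hc_def by (simp add: filter_empty_conv)
  qed
  have r4Q: "(2*xa - 1, 2*ya - 1) \<notin> set Q" using oddQ by blast
  have tot: "hc (2*xa - 1) (\<lambda>h. h > 2*ya - 1) Q + hc (2*xa - 1) (\<lambda>h. h < 2*ya - 1) Q = chg {p. fst p \<le> 2*xa - 1} Q"
    by (rule total[OF saQ r4Q])
  have "odd (chg {p. fst p \<le> 2*xa - 1} Q)"
    using chg_parity[OF QNe, of "{p. fst p \<le> 2*xa - 1}"] hdQ lastQ xa_l by (simp add: s_def dbl_def)
  then have "odd (Dv Q (last R))" using tot U4 by (simp add: Dv_def lastR)
  then show False using par D1 by simp
qed


lemma core2:
  fixes ps :: "(int \<times> int) list" and a b :: nat
  assumes dist: "distinct ps" and adj: "successively adjacent ps"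
    and east: "\<forall>j. Suc j < length ps \<longrightarrow> fst (ps!j) < fst (last ps)"
    and a: "Suc a < length ps" and b: "Suc b < length ps"
    and wa: "ps!Suc a = (fst (ps!a) - 1, snd (ps!a))"
    and wb: "ps!Suc b = (fst (ps!b) - 1, snd (ps!b))"
    and nv: "\<forall>z\<in>set (finew ps). fst z = 2 * fst(ps!a) - 1 \<longrightarrow> snd z \<le> 2 * snd(ps!a)"
    and sv: "\<forall>z\<in>set (finew ps). fst z = 2 * fst(ps!b) - 1 \<longrightarrow> snd z \<ge> 2 * snd(ps!b)"
  shows False
proof (cases "b \<le> a")
  case True then show ?thesis using core[OF assms(1-4) True wa wb nv sv] by simp
next
  case False
  let ?rs = "map flipy ps"
  have "inj flipy" by (auto simp: inj_def flipy_def)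
  have d: "distinct ?rs" using dist \<open>inj flipy\<close> by (metis distinct_map inj_on_subset subset_UNIV)
  have s: "successively adjacent ?rs" using adj
    by (simp add: successively_map adjacent_def flipy_def abs_minus_commute)
  have ne: "ps \<noteq> []" using a by auto
  have e: "\<forall>j. Suc j < length ?rs \<longrightarrow> fst (?rs!j) < fst (last ?rs)"
    using east ne by (simp add: flipy_def last_map)
  have "\<forall>z\<in>set (finew ?rs). fst z = 2 * fst(?rs!b) - 1 \<longrightarrow> snd z \<le> 2 * snd(?rs!b)"
    using sv b by (auto simp: finew_refl flipy_def)
  moreover have "\<forall>z\<in>set (finew ?rs). fst z = 2 * fst(?rs!a) - 1 \<longrightarrow> snd z \<ge> 2 * snd(?rs!a)"
    using nv a by (auto simp: finew_refl flipy_def)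
  moreover have "?rs!Suc b = (fst (?rs!b) - 1, snd (?rs!b))" using wb b by (simp add: flipy_def)
  moreover have "?rs!Suc a = (fst (?rs!a) - 1, snd (?rs!a))" using wa a by (simp add: flipy_def)
  ultimately show ?thesis using core[OF d s e _ _, of b a] a b False by simp
qed

lemma embF:
  assumes "z \<in> set (finew (map fst P))"
  shows "(real_of_int (fst z) / 2, real_of_int (snd z) / 2) \<in> emb P"
  using finew_set[OF assms]
proof
  assume "\<exists>i<length (map fst P). z = dbl (map fst P ! i)"
  then obtain i where i: "i < length P" "z = dbl (fst (P!i))" by auto
  have "rpos (fst (P!i)) \<in> rpos ` fst ` set P" using i by auto
  moreover have "rpos (fst (P!i)) = (real_of_int (fst z) / 2, real_of_int (snd z) / 2)"
    using i by (simp add: rpos_def dbl_def)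
  ultimately show ?thesis by (auto simp: emb_def)
next
  assume "\<exists>i. Suc i < length (map fst P) \<and> z = addp (map fst P ! i) (map fst P ! Suc i)"
  then obtain i where i: "Suc i < length P" "z = addp (fst (P!i)) (fst (P!Suc i))" by auto
  have "midpoint (rpos (fst (P!i))) (rpos (fst (P!Suc i))) \<in> closed_segment (rpos (fst (P ! i))) (rpos (fst (P ! Suc i)))"
    by simp
  moreover have "midpoint (rpos (fst (P!i))) (rpos (fst (P!Suc i))) = (real_of_int (fst z) / 2, real_of_int (snd z) / 2)"
    using i by (simp add: rpos_def addp_def midpoint_def add_divide_distrib)
  ultimately show ?thesis using i by (auto simp: emb_def)
qed


lemma west_of:
  assumes "Suc a < length P" "glue_dir P a \<in> {East, West}" "glue_dir P a \<noteq> East"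
    and "adjacent (fst (P!a)) (fst (P!Suc a))"
  shows "fst (P!Suc a) = (fst (fst (P!a)) - 1, snd (fst (P!a)))"
  using assms by (cases "fst (P!a)"; cases "fst (P!Suc a)")
    (auto simp: glue_dir_def dir_of_def adjacent_def split: if_splits)

theorem mainTheorem7:
  fixes T :: "'tt set" and glue :: "'tt \<Rightarrow> dir \<Rightarrow> 'g" and str :: "'g \<Rightarrow> nat"
    and \<sigma> :: "'tt tile set" and P :: "'tt tile list"
  assumes "valid_tas T \<sigma>"
    and "producible_path T glue str \<sigma> P"
    and "\<forall>b \<in> \<sigma> \<union> set P. b \<noteq> last P \<longrightarrow> fst (fst b) < fst (fst (last P))"
  shows "(\<forall>a. visible_north \<sigma> P a \<longrightarrow> glue_dir P a = East) \<or>
         (\<forall>a. visible_south \<sigma> P a \<longrightarrow> glue_dir P a = East)"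
proof (rule ccontr)
  assume "\<not> ?thesis"
  then obtain a b where va: "visible_north \<sigma> P a" "glue_dir P a \<noteq> East"
    and vb: "visible_south \<sigma> P b" "glue_dir P b \<noteq> East" by blast
  define ps where "ps = map fst P"
  have Pne: "P \<noteq> []" and pth: "is_path glue str P" using assms(2) by (auto simp: producible_path_def)
  have dist: "distinct ps" using pth by (simp add: is_path_def ps_def)
  have adjP: "\<And>i. Suc i < length P \<Longrightarrow> adjacent (fst (P!i)) (fst (P!Suc i))"
    using pth by (auto simp: is_path_def interacts_def)
  have adj: "successively adjacent ps"
    unfolding successively_conv_nth ps_def using adjP by simp
  have east: "\<forall>j. Suc j < length ps \<longrightarrow> fst (ps!j) < fst (last ps)"
  proof (intro allI impI)
    fix j assume j: "Suc j < length ps"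
    have lp: "last P = P ! (length P - 1)" using Pne by (simp add: last_conv_nth)
    have "P!j \<noteq> last P"
    proof
      assume "P!j = last P"
      then have "ps!j = ps!(length P - 1)" using lp j by (simp add: ps_def)
      then show False using dist j Pne nth_eq_iff_index_eq[OF dist, of j "length P - 1"] by (simp add: ps_def)
    qed
    moreover have "P!j \<in> set P" using j by (simp add: ps_def)
    ultimately have "fst (fst (P!j)) < fst (fst (last P))" using assms(3) by blast
    then show "fst (ps!j) < fst (last ps)" using j Pne by (simp add: ps_def last_map)
  qed
  have la: "Suc a < length P" "glue_dir P a \<in> {East, West}" using va by (auto simp: visible_north_def)
  have lb: "Suc b < length P" "glue_dir P b \<in> {East, West}" using vb by (auto simp: visible_south_def)
  have wa: "ps!Suc a = (fst (ps!a) - 1, snd (ps!a))"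
    using west_of[OF la va(2) adjP[OF la(1)]] la by (simp add: ps_def)
  have wb: "ps!Suc b = (fst (ps!b) - 1, snd (ps!b))"
    using west_of[OF lb vb(2) adjP[OF lb(1)]] lb by (simp add: ps_def)
  have gpa: "glue_pos P a = (real_of_int (2 * fst (ps!a) - 1) / 2, real_of_int (snd (ps!a)))"
    using wa la by (simp add: glue_pos_def ps_def rpos_def midpoint_def field_simps)
  have gpb: "glue_pos P b = (real_of_int (2 * fst (ps!b) - 1) / 2, real_of_int (snd (ps!b)))"
    using wb lb by (simp add: glue_pos_def ps_def rpos_def midpoint_def field_simps)
  have nv: "\<forall>z\<in>set (finew ps). fst z = 2 * fst(ps!a) - 1 \<longrightarrow> snd z \<le> 2 * snd(ps!a)"
  proof (intro ballI impI, rule ccontr)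
    fix z assume z: "z \<in> set (finew ps)" "fst z = 2 * fst(ps!a) - 1" "\<not> snd z \<le> 2 * snd(ps!a)"
    define t where "t = real_of_int (snd z) / 2 - real_of_int (snd (ps!a))"
    have t: "t > 0" using z(3) by (simp add: t_def)
    have "(fst (glue_pos P a), snd (glue_pos P a) + t) = (real_of_int (fst z) / 2, real_of_int (snd z) / 2)"
      using gpa z(2) by (simp add: t_def)
    moreover have "(real_of_int (fst z) / 2, real_of_int (snd z) / 2) \<in> emb P"
      using embF z(1) by (simp add: ps_def)
    ultimately have "(fst (glue_pos P a), snd (glue_pos P a) + t) \<in> emb P" by (simp only:)
    then show False using va(1) t unfolding visible_north_def by blast
  qed
  have sv: "\<forall>z\<in>set (finew ps). fst z = 2 * fst(ps!b) - 1 \<longrightarrow> snd z \<ge> 2 * snd(ps!b)"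
  proof (intro ballI impI, rule ccontr)
    fix z assume z: "z \<in> set (finew ps)" "fst z = 2 * fst(ps!b) - 1" "\<not> snd z \<ge> 2 * snd(ps!b)"
    define t where "t = real_of_int (snd (ps!b)) - real_of_int (snd z) / 2"
    have t: "t > 0" using z(3) by (simp add: t_def)
    have "(fst (glue_pos P b), snd (glue_pos P b) - t) = (real_of_int (fst z) / 2, real_of_int (snd z) / 2)"
      using gpb z(2) by (simp add: t_def)
    moreover have "(real_of_int (fst z) / 2, real_of_int (snd z) / 2) \<in> emb P"
      using embF z(1) by (simp add: ps_def)
    ultimately have "(fst (glue_pos P b), snd (glue_pos P b) - t) \<in> emb P" by (simp only:)
    then show False using vb(1) t unfolding visible_south_def by blast
  qed
  show False using core2[OF dist adj east _ _ wa wb nv sv] la(1) lb(1) by (simp add: ps_def)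
qed

end
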